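(* Let $N\ge2$, let $\Omega$ be an $N\times N$ nonnegative matrix with zero diagonal and positive row sums $k_i=\sum_j\Omega_{ij}$ whose associated directed graph (edge $i\to j$ iff $\Omega_{ij}>0$) is strongly connected, and let $\mathcal L_{ij}=\delta_{ij}-\Omega_{ij}/k_i$. Let $\nu$ be a nonzero Borel measure on $(0,\infty)$ with $\int_0^\infty\min\{1,\tau\}\,\nu(d\tau)<\infty$. Then the matrix integral $$g(\mathcal L)=\int_0^\infty\big(\mathbf 1-e^{-\tau\mathcal L}\big)\,\nu(d\tau)$$ converges entrywise and satisfies: (i) $\sum_{j=1}^N g(\mathcal L)_{ij}=0$ for every $i$; (ii) $g(\mathcal L)_{ii}>0$ for every $i$; (iii) $g(\mathcal L)_{ij}<0$ for all $i\neq j$. Consequently the matrix $W^{(g)}_{ij}=\delta_{ij}-g(\mathcal L)_{ij}/g(\mathcal L)_{ii}$ is row-stochastic with $W^{(g)}_{ii}=0$ and $W^{(g)}_{ij}>0$ for all $i\ne j$.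
   Context: $\mathbf 1$ denotes the identity matrix, $\delta_{ij}$ the Kronecker delta. The scalar function $g(\mu)=\int_0^\infty(1-e^{-\tau\mu})\nu(d\tau)$ is a Bernstein function with $g(0)=0$. *)

theory Defs
  imports "HOL-Analysis.Analysis"
begin

primrec matpow :: "real^'n^'n \<Rightarrow> nat \<Rightarrow> real^'n^'n" where
  "matpow A 0 = mat 1"
| "matpow A (Suc k) = A ** matpow A k"

definition mexp :: "real^'n^'n \<Rightarrow> real^'n^'n" where
  "mexp A = (\<chi> i j. \<Sum>k. (matpow A k $ i $ j) / fact k)"

definition rw_laplacian :: "real^'n^'n \<Rightarrow> real^'n^'n" where
  "rw_laplacian Om = (\<chi> i j. (if i = j then 1 else 0) - Om $ i $ j / (\<Sum>l\<in>UNIV. Om $ i $ l))"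

definition strongly_connected_mat :: "real^'n^'n \<Rightarrow> bool" where
  "strongly_connected_mat Om \<longleftrightarrow> (\<forall>i j. (i, j) \<in> {(a, b). Om $ a $ b > 0}\<^sup>*)"

end

theory Submission imports Defs begin

lemma mult_entry: "(A ** B) $ i $ j = (\<Sum>l\<in>UNIV. A $ i $ l * B $ l $ j)"
  by (simp add: matrix_matrix_mult_def)

lemma matpow_scale: "matpow (c *\<^sub>R X) m $ i $ j = c^m * matpow X m $ i $ j"
proof (induction m arbitrary: i j)
  case 0 show ?case by simp
next
  case (Suc m) show ?case by (simp add: mult_entry Suc sum_distrib_left mult_ac)
qed

lemma binom_real:
  fixes x :: "nat \<Rightarrow> real"
  shows "(\<Sum>m\<le>Suc k. real (Suc k choose m) * c^(Suc k - m) * x m)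
       = (\<Sum>m\<le>k. real (k choose m) * c^(k-m) * x (Suc m)) + c * (\<Sum>m\<le>k. real (k choose m) * c^(k-m) * x m)"
proof -
  have s1: "(\<Sum>m\<le>Suc k. real (Suc k choose m) * c^(Suc k - m) * x m)
     = c^Suc k * x 0 + (\<Sum>m\<le>k. real (k choose m) * c^(k-m) * x (Suc m)) + (\<Sum>m\<le>k. real (k choose Suc m) * c^(k-m) * x (Suc m))"
    by (simp add: sum.atMost_Suc_shift sum.distrib algebra_simps del: sum.atMost_Suc)
  have s2a: "(\<Sum>m\<le>Suc k. real (k choose m) * c^(Suc k-m) * x m) = (\<Sum>m\<le>k. real (k choose m) * c^(Suc k-m) * x m)"
    by simp
  also have "\<dots> = (\<Sum>m\<le>k. c * (real (k choose m) * c^(k-m) * x m))"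
    by (rule sum.cong) (auto simp: Suc_diff_le)
  also have "\<dots> = c * (\<Sum>m\<le>k. real (k choose m) * c^(k-m) * x m)"
    by (simp add: sum_distrib_left)
  finally have s2: "(\<Sum>m\<le>Suc k. real (k choose m) * c^(Suc k-m) * x m) = c * (\<Sum>m\<le>k. real (k choose m) * c^(k-m) * x m)" .
  have s3: "(\<Sum>m\<le>Suc k. real (k choose m) * c^(Suc k-m) * x m) = c^Suc k * x 0 + (\<Sum>m\<le>k. real (k choose Suc m) * c^(k-m) * x (Suc m))"
    by (simp add: sum.atMost_Suc_shift del: sum.atMost_Suc)
  show ?thesis using s1 s2 s3 by simp
qed

lemma binom_mat:
  "matpow (X + c *\<^sub>R mat 1) k $ i $ j = (\<Sum>m\<le>k. real (k choose m) * c^(k-m) * matpow X m $ i $ j)"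
proof (induction k arbitrary: i j)
  case 0 show ?case by simp
next
  case (Suc k)
  have h1: "matpow (X + c *\<^sub>R mat 1) (Suc k) $ i $ j = (\<Sum>l\<in>UNIV. X$i$l * matpow (X + c *\<^sub>R mat 1) k $ l $ j) + c * matpow (X + c *\<^sub>R mat 1) k $ i $ j"
  proof -
    have e: "(X + c *\<^sub>R mat 1) $ i $ l * M $ l $ j = X$i$l * M $ l $ j + (if i = l then c * M $ l $ j else 0)" for l and M :: "real^'a^'a"
      by (simp add: mat_def distrib_right)
    show ?thesis unfolding matpow.simps mult_entry e sum.distrib by simp
  qed
  have h2: "(\<Sum>l\<in>UNIV. X$i$l * (\<Sum>m\<le>k. real (k choose m) * c^(k-m) * matpow X m $ l $ j))
      = (\<Sum>m\<le>k. real (k choose m) * c^(k-m) * matpow X (Suc m) $ i $ j)"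
    unfolding sum_distrib_left mult_entry matpow.simps
    by (subst sum.swap) (simp add: mult_ac)
  show ?case unfolding h1 Suc h2 binom_real[where x="\<lambda>m. matpow X m $ i $ j"] by simp
qed

lemma pow_nonneg: assumes "\<forall>i j. P$i$j \<ge> (0::real)" shows "matpow P m $ i $ j \<ge> 0"
proof (induction m arbitrary: i j)
  case 0 show ?case by (simp add: mat_def)
next
  case (Suc m) show ?case using assms Suc by (simp add: mult_entry sum_nonneg)
qed

lemma pow_rowsum: assumes "\<forall>i. (\<Sum>j\<in>UNIV. P$i$j) = (1::real)" shows "(\<Sum>j\<in>UNIV. matpow P m $ i $ j) = 1"
proof (induction m arbitrary: i)
  case 0 show ?case by (simp add: mat_def)
next
  case (Suc m)
  have "(\<Sum>j\<in>UNIV. matpow P (Suc m) $ i $ j) = (\<Sum>l\<in>UNIV. P$i$l * (\<Sum>j\<in>UNIV. matpow P m $ l $ j))"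
    unfolding matpow.simps mult_entry sum_distrib_left by (rule sum.swap)
  also have "\<dots> = 1" using Suc assms by simp
  finally show ?case .
qed

lemma pow_le1: assumes "\<forall>i j. P$i$j \<ge> (0::real)" "\<forall>i. (\<Sum>j\<in>UNIV. P$i$j) = (1::real)"
  shows "matpow P m $ i $ j \<le> 1"
proof -
  have "matpow P m $ i $ j \<le> (\<Sum>j\<in>UNIV. matpow P m $ i $ j)"
    by (rule member_le_sum) (use pow_nonneg[OF assms(1)] in auto)
  thus ?thesis using pow_rowsum[OF assms(2)] by simp
qed

lemma path_pos: assumes nn: "\<forall>i j. P$i$j \<ge> (0::real)"
  and "(a,b) \<in> {(x,y). P$x$y > 0}\<^sup>*" shows "\<exists>m. matpow P m $ a $ b > 0"
  using assms(2)
proof (induction rule: converse_rtrancl_induct)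
  case base show ?case by (rule exI[of _ 0]) (simp add: mat_def)
next
  case (step y z)
  then obtain m where m: "matpow P m $ z $ b > 0" by auto
  have "P $ y $ z * matpow P m $ z $ b \<le> (\<Sum>l\<in>UNIV. P$y$l * matpow P m $ l $ b)"
    by (rule member_le_sum[where f="\<lambda>l. P$y$l * matpow P m $ l $ b"]) (use nn pow_nonneg[OF nn] in auto)
  moreover have "P $ y $ z * matpow P m $ z $ b > 0" using step(1) m by simp
  ultimately show ?case by (intro exI[of _ "Suc m"]) (simp add: mult_entry)
qed


definition ser :: "real^'n^'n \<Rightarrow> real \<Rightarrow> 'n \<Rightarrow> 'n \<Rightarrow> nat \<Rightarrow> real" where
  "ser P t i j m = t^m * matpow P m $ i $ j / fact m"

lemma ser_summable:
  assumes nn: "\<forall>i j. P$i$j \<ge> (0::real)" and rs: "\<forall>i. (\<Sum>j\<in>UNIV. P$i$j) = (1::real)"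
  shows "summable (\<lambda>m. norm (ser P t i j m))"
proof (rule summable_comparison_test[OF _ summable_exp[of "\<bar>t\<bar>"]])
  show "\<exists>N. \<forall>n\<ge>N. norm (norm (ser P t i j n)) \<le> inverse (fact n) * \<bar>t\<bar> ^ n"
  proof (intro exI allI impI)
    fix n :: nat
    have "\<bar>matpow P n $ i $ j\<bar> \<le> 1" using pow_nonneg[OF nn] pow_le1[OF nn rs] by (simp add: abs_le_iff)
    hence "\<bar>t\<bar>^n * \<bar>matpow P n $ i $ j\<bar> \<le> \<bar>t\<bar>^n" by (simp add: mult_left_le)
    thus "norm (norm (ser P t i j n)) \<le> inverse (fact n) * \<bar>t\<bar> ^ n"
      by (simp add: ser_def abs_mult power_abs divide_inverse mult_ac mult_left_mono)
  qed
qed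

lemma mexp_formula:
  assumes nn: "\<forall>i j. P$i$j \<ge> (0::real)" and rs: "\<forall>i. (\<Sum>j\<in>UNIV. P$i$j) = (1::real)"
  shows "mexp (t *\<^sub>R P + (-t) *\<^sub>R mat 1) $ i $ j = (\<Sum>m. ser P t i j m) * exp (-t)"
proof -
  let ?A = "t *\<^sub>R P + (-t) *\<^sub>R mat 1"
  let ?b = "\<lambda>n. (-t)^n / fact n"
  have trm: "matpow ?A k $ i $ j / fact k = (\<Sum>m\<le>k. ser P t i j m * ?b (k-m))" for k
  proof -
    have "matpow ?A k $ i $ j = (\<Sum>m\<le>k. real (k choose m) * (-t)^(k-m) * (t^m * matpow P m $ i $ j))"
      using binom_mat[of "t *\<^sub>R P" "-t" k i j] by (simp only: matpow_scale)
    hence "matpow ?A k $ i $ j / fact k = (\<Sum>m\<le>k. real (k choose m) * (-t)^(k-m) * (t^m * matpow P m $ i $ j) / fact k)"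
      by (simp add: sum_divide_distrib)
    also have "\<dots> = (\<Sum>m\<le>k. ser P t i j m * ?b (k-m))"
    proof (rule sum.cong)
      fix m assume "m \<in> {..k}"
      hence mk: "m \<le> k" by simp
      show "real (k choose m) * (-t)^(k-m) * (t^m * matpow P m $ i $ j) / fact k = ser P t i j m * ?b (k-m)"
        unfolding ser_def binomial_fact[OF mk] by (simp add: field_simps)
    qed simp
    finally show ?thesis .
  qed
  have bs: "summable (\<lambda>n. norm (?b n))"
    using summable_exp[of "\<bar>t\<bar>"] by (simp add: abs_mult power_abs divide_inverse mult_ac)
  have bsum: "(\<Sum>n. ?b n) = exp (-t)"
    using exp_converges[of "-t"] by (simp add: sums_iff divide_inverse mult_ac)
  have "(\<lambda>k. matpow ?A k $ i $ j / fact k) sums ((\<Sum>m. ser P t i j m) * exp (-t))"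
    using Cauchy_product_sums[OF ser_summable[OF nn rs] bs] unfolding trm bsum .
  thus ?thesis by (simp add: mexp_def sums_iff)
qed

lemma ser_rowsum:
  assumes nn: "\<forall>i j. P$i$j \<ge> (0::real)" and rs: "\<forall>i. (\<Sum>j\<in>UNIV. P$i$j) = (1::real)"
  shows "(\<Sum>j\<in>UNIV. \<Sum>m. ser P t i j m) = exp t"
proof -
  have "(\<Sum>j\<in>UNIV. \<Sum>m. ser P t i j m) = (\<Sum>m. \<Sum>j\<in>UNIV. ser P t i j m)"
    by (rule suminf_sum[symmetric]) (rule summable_norm_cancel[OF ser_summable[OF nn rs]])
  also have "(\<lambda>m. \<Sum>j\<in>UNIV. ser P t i j m) = (\<lambda>m. t^m / fact m)"
    by (simp add: ser_def sum_divide_distrib[symmetric] sum_distrib_left[symmetric] pow_rowsum[OF rs])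
  also have "(\<Sum>m. t^m / fact m) = exp t"
    using exp_converges[of t] by (simp add: sums_iff divide_inverse mult_ac)
  finally show ?thesis .
qed

lemma ser_nonneg:
  assumes nn: "\<forall>i j. P$i$j \<ge> (0::real)" and "t \<ge> 0"
  shows "ser P t i j m \<ge> 0"
  using pow_nonneg[OF nn] assms(2) by (simp add: ser_def)

lemma suminf_ge_ser:
  assumes nn: "\<forall>i j. P$i$j \<ge> (0::real)" and rs: "\<forall>i. (\<Sum>j\<in>UNIV. P$i$j) = (1::real)" and "t \<ge> 0"
  shows "ser P t i j m \<le> (\<Sum>m. ser P t i j m)"
  using sum_le_suminf[OF summable_norm_cancel[OF ser_summable[OF nn rs]], of "{m}"] ser_nonneg[OF nn assms(3)]
  by simp

lemma ser_meas:
  assumes nn: "\<forall>i j. P$i$j \<ge> (0::real)" and rs: "\<forall>i. (\<Sum>j\<in>UNIV. P$i$j) = (1::real)"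
  shows "(\<lambda>t. \<Sum>m. ser P t i j m) \<in> borel_measurable borel"
proof (rule borel_measurable_LIMSEQ_real[where u="\<lambda>n t. \<Sum>m<n. ser P t i j m"])
  fix n show "(\<lambda>t. \<Sum>m<n. ser P t i j m) \<in> borel_measurable borel"
    unfolding ser_def by measurable
next
  fix t :: real
  show "(\<lambda>n. \<Sum>m<n. ser P t i j m) \<longlonglongrightarrow> (\<Sum>m. ser P t i j m)"
    by (rule summable_LIMSEQ[OF summable_norm_cancel[OF ser_summable[OF nn rs]]])
qed


definition Pm :: "real^'n^'n \<Rightarrow> real^'n^'n" where
  "Pm Om = (\<chi> i j. Om $ i $ j / (\<Sum>l\<in>UNIV. Om $ i $ l))"

lemma lap_eq: "(-t) *\<^sub>R rw_laplacian Om = t *\<^sub>R Pm Om + (-t) *\<^sub>R mat 1"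
  by (simp add: vec_eq_iff rw_laplacian_def Pm_def mat_def algebra_simps)


theorem mainTheorem3:
  fixes Om :: "real^'n^'n" and nu :: "real measure"
  assumes N2: "CARD('n) \<ge> 2"
    and nonneg: "\<forall>i j. Om $ i $ j \<ge> 0"
    and zero_diag: "\<forall>i. Om $ i $ i = 0"
    and rowsum_pos: "\<forall>i. (\<Sum>j\<in>UNIV. Om $ i $ j) > 0"
    and sconn: "strongly_connected_mat Om"
    and nu_borel: "sets nu = sets borel"
    and nu_support: "emeasure nu {..0} = 0"
    and nu_nonzero: "emeasure nu (space nu) \<noteq> 0"
    and nu_levy: "integrable nu (\<lambda>\<tau>. min 1 \<tau>)"
  shows "(\<forall>i j. integrable nu (\<lambda>\<tau>. (mat 1 - mexp ((-\<tau>) *\<^sub>R rw_laplacian Om)) $ i $ j))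
    \<and> (let G = (\<chi> i j. \<integral>\<tau>. (mat 1 - mexp ((-\<tau>) *\<^sub>R rw_laplacian Om)) $ i $ j \<partial>nu);
           W = (\<chi> i j. (if i = j then 1 else 0) - G $ i $ j / G $ i $ i)
       in (\<forall>i. (\<Sum>j\<in>UNIV. G $ i $ j) = 0)
        \<and> (\<forall>i. G $ i $ i > 0)
        \<and> (\<forall>i j. i \<noteq> j \<longrightarrow> G $ i $ j < 0)
        \<and> (\<forall>i j. W $ i $ j \<ge> 0)
        \<and> (\<forall>i. (\<Sum>j\<in>UNIV. W $ i $ j) = 1)
        \<and> (\<forall>i. W $ i $ i = 0)
        \<and> (\<forall>i j. i \<noteq> j \<longrightarrow> W $ i $ j > 0))"
  proof -
  define P where "P = Pm Om"
  have Pnn: "\<forall>i j. P$i$j \<ge> 0" using nonneg rowsum_pos by (auto simp: P_def Pm_def intro!: divide_nonneg_pos)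
  have Prs: "\<forall>i. (\<Sum>j\<in>UNIV. P$i$j) = 1"
  proof
    fix i show "(\<Sum>j\<in>UNIV. P$i$j) = 1"
      using rowsum_pos[rule_format, of i] by (simp add: P_def Pm_def sum_divide_distrib[symmetric])
  qed
  define E where "E t i j = (\<Sum>m. ser P t i j m)" for t i j
  define F where "F i j t = (if i = j then 1 else 0) - E t i j * exp (-t)" for i j t
  have Feq: "(\<lambda>\<tau>. (mat 1 - mexp ((-\<tau>) *\<^sub>R rw_laplacian Om)) $ i $ j) = F i j" for i j
  proof
    fix \<tau>
    have "mexp ((-\<tau>) *\<^sub>R rw_laplacian Om) $ i $ j = E \<tau> i j * exp(-\<tau>)"
      unfolding lap_eq E_def P_def by (rule mexp_formula[OF Pnn[unfolded P_def] Prs[unfolded P_def]])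
    thus "(mat 1 - mexp ((-\<tau>) *\<^sub>R rw_laplacian Om)) $ i $ j = F i j \<tau>"
      by (simp add: mat_def F_def)
  qed
  have measF: "F i j \<in> borel_measurable nu" for i j
  proof -
    have "(\<lambda>t. E t i j) \<in> borel_measurable borel" unfolding E_def by (rule ser_meas[OF Pnn Prs])
    hence "F i j \<in> borel_measurable borel" unfolding F_def by measurable
    thus ?thesis by (subst measurable_cong_sets[OF nu_borel refl])
  qed
  have AEpos: "AE t in nu. t > 0"
    by (rule AE_I'[of "{..0}"]) (auto simp: null_sets_def nu_borel nu_support)
  have Ers: "(\<Sum>j\<in>UNIV. E t i j * exp (-t)) = 1" for t i
  proof -
    have "(\<Sum>j\<in>UNIV. E t i j * exp (-t)) = (\<Sum>j\<in>UNIV. E t i j) * exp (-t)" by (simp add: sum_distrib_right)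
    also have "\<dots> = exp t * exp (-t)" unfolding E_def ser_rowsum[OF Pnn Prs] ..
    also have "\<dots> = 1" by (simp add: exp_minus field_simps)
    finally show ?thesis .
  qed
  have Enn: "E t i j * exp (-t) \<ge> 0" if "t \<ge> 0" for t i j
    unfolding E_def using suminf_nonneg[OF summable_norm_cancel[OF ser_summable[OF Pnn Prs]]] ser_nonneg[OF Pnn that]
    by simp
  have Ediag: "E t i i * exp (-t) \<ge> exp (-t)" if "t \<ge> 0" for t i
  proof -
    have "ser P t i i 0 \<le> E t i i" unfolding E_def by (rule suminf_ge_ser[OF Pnn Prs that])
    hence "1 \<le> E t i i" by (simp add: ser_def mat_def)
    thus ?thesis by simp
  qed
  have Epos: "E t i j * exp (-t) > 0" if "t > 0" "i \<noteq> j" for t i j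
  proof -
    have "(i, j) \<in> {(a, b). P $ a $ b > 0}\<^sup>*"
    proof -
      have "(i, j) \<in> {(a, b). Om $ a $ b > 0}\<^sup>*" using sconn by (simp add: strongly_connected_mat_def)
      moreover have "{(a, b). Om $ a $ b > 0} \<subseteq> {(a, b). P $ a $ b > 0}"
        using rowsum_pos by (auto simp: P_def Pm_def)
      ultimately show ?thesis using rtrancl_mono by blast
    qed
    then obtain m where m: "matpow P m $ i $ j > 0" using path_pos[OF Pnn] by blast
    have "0 < ser P t i j m" using m that(1) by (simp add: ser_def)
    also have "\<dots> \<le> E t i j" unfolding E_def by (rule suminf_ge_ser[OF Pnn Prs]) (use that in simp)
    finally show ?thesis by simp
  qed
  have bound: "\<bar>F i j t\<bar> \<le> min 1 t" if "t > 0" for i j t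
  proof -
    define q where "q l = E t i l * exp (-t)" for l
    have qs: "sum q UNIV = 1" using Ers unfolding q_def .
    have qnn: "q l \<ge> 0" for l using Enn that unfolding q_def by simp
    have qi: "q i \<ge> exp (-t)" using Ediag that unfolding q_def by simp
    have e1: "1 - exp (-t) \<le> min 1 t" using exp_ge_add_one_self[of "-t"] by (simp add: min_def)
    show ?thesis
    proof (cases "i = j")
      case True
      have "q i \<le> sum q UNIV" by (rule member_le_sum) (use qnn in auto)
      moreover have "F i j t = 1 - q j" using True by (simp add: F_def q_def)
      ultimately show ?thesis using True qs qi e1 qnn[of j] by (simp add: min_def abs_if)
    next
      case False
      have "sum q {i, j} \<le> sum q UNIV" by (rule sum_mono2) (use qnn in auto)
      hence "q i + q j \<le> 1" using False qs by simp
      moreover have "F i j t = - q j" using False by (simp add: F_def q_def)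
      ultimately show ?thesis using False qi e1 qnn[of j] qnn[of i] that by (auto simp: min_def abs_if split: if_splits)
    qed
  qed
  have intF: "integrable nu (F i j)" for i j
  proof (rule Bochner_Integration.integrable_bound[OF nu_levy measF])
    show "AE t in nu. norm (F i j t) \<le> norm (min 1 t)"
      using AEpos by eventually_elim (use bound in auto)
  qed
  define G where "G = (\<chi> i j. \<integral>\<tau>. (mat 1 - mexp ((-\<tau>) *\<^sub>R rw_laplacian Om)) $ i $ j \<partial>nu)"
  have Gij: "G $ i $ j = integral\<^sup>L nu (F i j)" for i j unfolding G_def Feq by simp
  have Grs: "(\<Sum>j\<in>UNIV. G $ i $ j) = 0" for i
  proof -
    have "(\<Sum>j\<in>UNIV. G $ i $ j) = integral\<^sup>L nu (\<lambda>t. \<Sum>j\<in>UNIV. F i j t)"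
      unfolding Gij using Bochner_Integration.integral_sum[where I=UNIV and M=nu and f="\<lambda>j. F i j"] intF by simp
    also have "(\<lambda>t. \<Sum>j\<in>UNIV. F i j t) = (\<lambda>t. 0)"
    proof
      fix t
      have "(\<Sum>j\<in>UNIV. F i j t) = (\<Sum>j\<in>UNIV. (if i = j then 1 else 0)) - (\<Sum>j\<in>UNIV. E t i j * exp (-t))"
        unfolding F_def by (rule sum_subtractf)
      thus "(\<Sum>j\<in>UNIV. F i j t) = 0" using Ers by simp
    qed
    finally show ?thesis by simp
  qed
  have Gneg: "G $ i $ j < 0" if "i \<noteq> j" for i j
  proof -
    let ?h = "\<lambda>t. - F i j t"
    have ih: "integrable nu ?h" using intF by simp
    have AEh: "AE t in nu. 0 < ?h t" using AEpos by eventually_elim (use Epos that in \<open>simp add: F_def\<close>)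
    hence AEh0: "AE t in nu. 0 \<le> ?h t" by eventually_elim simp
    have ge: "integral\<^sup>L nu ?h \<ge> 0" by (rule integral_nonneg_AE[OF AEh0])
    have "integral\<^sup>L nu ?h \<noteq> 0"
    proof
      assume "integral\<^sup>L nu ?h = 0"
      hence "AE t in nu. ?h t = 0" using integral_nonneg_eq_0_iff_AE[OF ih AEh0] by simp
      with AEh have "AE t in nu. False" by eventually_elim simp
      hence "emeasure nu {x\<in>space nu. \<not> False} = 0" by (subst (asm) AE_iff_measurable[OF _ refl]) auto
      thus False using nu_nonzero by simp
    qed
    with ge have "integral\<^sup>L nu ?h > 0" by simp
    thus ?thesis unfolding Gij by simp
  qed
  have Gpos: "G $ i $ i > 0" for i
  proof -
    have ne: "UNIV - {i} \<noteq> {}"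
    proof
      assume "UNIV - {i} = {}"
      hence "(UNIV :: 'n set) = {i}" by auto
      hence "CARD('n) = 1" by (metis card.empty card_insert_disjoint empty_iff finite.emptyI One_nat_def)
      thus False using N2 by simp
    qed
    have "0 < (\<Sum>j\<in>UNIV - {i}. - G $ i $ j)" by (rule sum_pos) (use ne Gneg in auto)
    moreover have "(\<Sum>j\<in>UNIV. G $ i $ j) = G $ i $ i + (\<Sum>j\<in>UNIV - {i}. G $ i $ j)"
      by (rule sum.remove) auto
    ultimately show ?thesis using Grs[of i] by (simp add: sum_negf)
  qed
  define W where "W = (\<chi> i j. (if i = j then 1 else 0) - G $ i $ j / G $ i $ i)"
  have Wrs: "(\<Sum>j\<in>UNIV. W $ i $ j) = 1" for i
  proof -
    have "(\<Sum>j\<in>UNIV. W $ i $ j) = (\<Sum>j\<in>UNIV. (if i = j then 1 else 0)) - (\<Sum>j\<in>UNIV. G $ i $ j / G $ i $ i)"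
      unfolding W_def by (simp add: sum_subtractf)
    also have "\<dots> = 1" using Grs[of i] by (simp add: sum_divide_distrib[symmetric])
    finally show ?thesis .
  qed
  have Wpos: "W $ i $ j > 0" if "i \<noteq> j" for i j
    using Gneg[OF that] Gpos[of i] that by (simp add: W_def divide_neg_pos)
  have Wd: "W $ i $ i = 0" for i using Gpos[of i] by (simp add: W_def)
  have Wnn: "W $ i $ j \<ge> 0" for i j using Wpos[of i j] Wd[of i] by (cases "i = j") auto
  show ?thesis
    unfolding Let_def G_def[symmetric] unfolding W_def[symmetric] unfolding Feq
    using intF Grs Gpos Gneg Wnn Wrs Wd Wpos by blast
qed

end
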